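(* Let $\ell\ge 3$ be an integer, $\mathcal F=\{K_4,C_5,C_6,C_7,B_\ell\}$, and let $G$ be a graph. If $G$ contains one of the configurations (D2), (D3), (D5)–(D12) below and $H$ is the subgraph of $G$ induced by its vertices, then $H$ is enhanced weakly $(\mathcal F,4)$-boundary-reducible in $G$ with reduced part $R=V(H)$ (for a suitable nonempty $\mathrm{Fix}(H)\subseteq V(H)$). (D2) a triangle $T(3,3,3)$ or $T(3,3,4)$. (D3) $D_1=\mathrm{Dia}(6-3,4,3)$ and $D_2=\mathrm{Dia}(6-3,4,4)$ sharing their middle $6$-vertex and no other vertex. (D5) $\mathrm{Dia}(4-5,3,3)$. (D6) $\mathrm{Dia}(4-3,4,4)$. (D7) $\mathrm{Dia}(5-3,4,4)$ together with a $3$-vertex outside it adjacent to its middle $5$-vertex. (D8) $\mathrm{Dia}(5-5,3,3)$ together with a $3$-vertex outside it adjacent to one of its middle $5$-vertices. (D9) three $3$-vertices $u,v,w$ with $uv,vw\in E(G)$ and $uw\notin E(G)$. (D10) $\mathrm{Dia}(5-3,4,3)$. (D11) $T(5,3,3)$ together with a $3$-vertex outside it adjacent to its $5$-vertex. (D12) two triangles $T(6,3,3)$ sharing their $6$-vertex and no other vertex.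
   Context: $B_\ell$ is the book on $\ell$ vertices: an edge $xy$ plus $\ell-2$ further vertices each adjacent to exactly $x$ and $y$. All degrees are degrees in $G$; a $d$-vertex is a vertex of degree exactly $d$. $T(a,b,c)$ is a triangle with vertex degrees $a,b,c$. A diamond is a subgraph isomorphic to $K_4$ minus an edge; its two vertices of degree $3$ in it are middle vertices, the other two side vertices; $\mathrm{Dia}(a-b,c,d)$ is a diamond with middle vertex degrees $a,b$ and side vertex degrees $c,d$. For an induced subgraph $H$ of $G$ and $\emptyset\ne R\subseteq V(H)$, $\deg_R(v)$ is the degree of $v$ in $G[R]$. A set $I\subseteq V(H)$ is $\mathcal F$-free if adding to $H$ a new vertex adjacent exactly to $I$ creates no subgraph isomorphic to a member of $\mathcal F$. For $f:R\to\mathbb Z$, an $f$-assignment is a list assignment $L$ on $R$ with $|L(v)|\ge f(v)$; $f\downarrow v$ is $f$ changed to value $1$ at $v$; $1_I$ is the indicator of $I$. $H$ is enhanced weakly $(\mathcal F,k)$-boundary-reducible in $G$ with reduced part $R$ if there is a nonempty $\mathrm{Fix}(H)\subseteq R$ such that (FIX) every $v\in\mathrm{Fix}(H)$ satisfies $\deg_G(v)-\deg_R(v)\le k-3$ and $H[R]$ is properly $L$-colorable for every $((k-\deg_G+\deg_R)\downarrow v)$-assignment $L$; and (FORB) for every $\mathcal F$-free $I\subseteq R$ with $|I|\le k-3$, $H[R]$ is properly $L$-colorable for every $(k-\deg_G+\deg_R-1_I)$-assignment $L$. *)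

theory Defs
  imports Main
begin

definition simple_graph :: "'a set \<Rightarrow> ('a \<Rightarrow> 'a \<Rightarrow> bool) \<Rightarrow> bool" where
  "simple_graph V E \<longleftrightarrow> finite V \<and> (\<forall>u v. E u v \<longrightarrow> E v u) \<and> (\<forall>u. \<not> E u u)
     \<and> (\<forall>u v. E u v \<longrightarrow> u \<in> V \<and> v \<in> V)"

definition dg :: "'a set \<Rightarrow> ('a \<Rightarrow> 'a \<Rightarrow> bool) \<Rightarrow> 'a \<Rightarrow> int" where
  "dg R E v = int (card {u \<in> R. E v u})"

definition tri :: "('a \<Rightarrow> 'a \<Rightarrow> bool) \<Rightarrow> 'a \<Rightarrow> 'a \<Rightarrow> 'a \<Rightarrow> bool" where
  "tri E a b c \<longleftrightarrow> distinct [a, b, c] \<and> E a b \<and> E b c \<and> E a c"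

text \<open>A diamond (K4 minus an edge) as a subgraph, with middle vertices m1 m2
  and side vertices s1 s2.\<close>
definition dia :: "('a \<Rightarrow> 'a \<Rightarrow> bool) \<Rightarrow> 'a \<Rightarrow> 'a \<Rightarrow> 'a \<Rightarrow> 'a \<Rightarrow> bool" where
  "dia E m1 m2 s1 s2 \<longleftrightarrow> distinct [m1, m2, s1, s2] \<and> E m1 m2
     \<and> E m1 s1 \<and> E m1 s2 \<and> E m2 s1 \<and> E m2 s2"

definition has_K4 :: "'b set \<Rightarrow> ('b \<Rightarrow> 'b \<Rightarrow> bool) \<Rightarrow> bool" where
  "has_K4 W A \<longleftrightarrow> (\<exists>a b c d. distinct [a, b, c, d] \<and> {a, b, c, d} \<subseteq> W
     \<and> A a b \<and> A a c \<and> A a d \<and> A b c \<and> A b d \<and> A c d)"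

definition has_cycle :: "nat \<Rightarrow> 'b set \<Rightarrow> ('b \<Rightarrow> 'b \<Rightarrow> bool) \<Rightarrow> bool" where
  "has_cycle k W A \<longleftrightarrow> (\<exists>xs. length xs = k \<and> distinct xs \<and> set xs \<subseteq> W
     \<and> (\<forall>i<k. A (xs ! i) (xs ! ((i + 1) mod k))))"

definition has_book :: "nat \<Rightarrow> 'b set \<Rightarrow> ('b \<Rightarrow> 'b \<Rightarrow> bool) \<Rightarrow> bool" where
  "has_book l W A \<longleftrightarrow> (\<exists>x y P. x \<noteq> y \<and> x \<in> W \<and> y \<in> W \<and> A x y
     \<and> finite P \<and> P \<subseteq> W - {x, y} \<and> card P = l - 2 \<and> (\<forall>p\<in>P. A x p \<and> A y p))"

definition contains_F :: "nat \<Rightarrow> 'b set \<Rightarrow> ('b \<Rightarrow> 'b \<Rightarrow> bool) \<Rightarrow> bool" where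
  "contains_F l W A \<longleftrightarrow> has_K4 W A \<or> has_cycle 5 W A \<or> has_cycle 6 W A
     \<or> has_cycle 7 W A \<or> has_book l W A"

text \<open>H = G[Hs]; the graph obtained from H by adding a new vertex (None)
  adjacent exactly to I.\<close>
definition ext_vs :: "'a set \<Rightarrow> 'a option set" where
  "ext_vs Hs = insert None (Some ` Hs)"

definition ext_adj :: "('a \<Rightarrow> 'a \<Rightarrow> bool) \<Rightarrow> 'a set \<Rightarrow> 'a set \<Rightarrow> 'a option \<Rightarrow> 'a option \<Rightarrow> bool" where
  "ext_adj E Hs I x y = (case (x, y) of
       (Some u, Some v) \<Rightarrow> u \<in> Hs \<and> v \<in> Hs \<and> E u v
     | (None, Some v) \<Rightarrow> v \<in> I
     | (Some u, None) \<Rightarrow> u \<in> I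
     | (None, None) \<Rightarrow> False)"

text \<open>I is F-free, where Fcont W A says that the graph (W, A) contains a
  subgraph isomorphic to a member of F.\<close>
definition F_free :: "('a option set \<Rightarrow> ('a option \<Rightarrow> 'a option \<Rightarrow> bool) \<Rightarrow> bool)
    \<Rightarrow> ('a \<Rightarrow> 'a \<Rightarrow> bool) \<Rightarrow> 'a set \<Rightarrow> 'a set \<Rightarrow> bool" where
  "F_free Fcont E Hs I \<longleftrightarrow> I \<subseteq> Hs \<and> \<not> Fcont (ext_vs Hs) (ext_adj E Hs I)"

text \<open>f-assignment on R: lists are finite sets of colours (natural numbers).\<close>
definition f_assignment :: "'a set \<Rightarrow> ('a \<Rightarrow> int) \<Rightarrow> ('a \<Rightarrow> nat set) \<Rightarrow> bool" where
  "f_assignment R f L \<longleftrightarrow> (\<forall>v\<in>R. finite (L v) \<and> int (card (L v)) \<ge> f v)"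

definition L_colorable :: "('a \<Rightarrow> 'a \<Rightarrow> bool) \<Rightarrow> 'a set \<Rightarrow> ('a \<Rightarrow> nat set) \<Rightarrow> bool" where
  "L_colorable E R L \<longleftrightarrow> (\<exists>c. (\<forall>v\<in>R. c v \<in> L v)
     \<and> (\<forall>u\<in>R. \<forall>v\<in>R. E u v \<longrightarrow> c u \<noteq> c v))"

definition ewbr :: "'a set \<Rightarrow> ('a \<Rightarrow> 'a \<Rightarrow> bool) \<Rightarrow> 'a set
    \<Rightarrow> ('a option set \<Rightarrow> ('a option \<Rightarrow> 'a option \<Rightarrow> bool) \<Rightarrow> bool) \<Rightarrow> int \<Rightarrow> 'a set \<Rightarrow> bool" where
  "ewbr V E Hs Fcont k R \<longleftrightarrow> R \<noteq> {} \<and> R \<subseteq> Hs \<and>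
    (\<exists>Fix. Fix \<noteq> {} \<and> Fix \<subseteq> R \<and>
      (\<forall>v\<in>Fix. dg V E v - dg R E v \<le> k - 3 \<and>
         (\<forall>L. f_assignment R ((\<lambda>u. k - dg V E u + dg R E u)(v := 1)) L
              \<longrightarrow> L_colorable E R L)) \<and>
      (\<forall>I. F_free Fcont E Hs I \<and> I \<subseteq> R \<and> int (card I) \<le> k - 3 \<longrightarrow>
         (\<forall>L. f_assignment R (\<lambda>u. k - dg V E u + dg R E u - (if u \<in> I then 1 else 0)) L
              \<longrightarrow> L_colorable E R L)))"

definition configuration :: "'a set \<Rightarrow> ('a \<Rightarrow> 'a \<Rightarrow> bool) \<Rightarrow> 'a set \<Rightarrow> bool" where
  "configuration V E S \<longleftrightarrow>
    \<comment> \<open>(D2)\<close>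
    (\<exists>a b c. tri E a b c \<and> dg V E a = 3 \<and> dg V E b = 3 \<and> (dg V E c = 3 \<or> dg V E c = 4)
       \<and> S = {a, b, c}) \<or>
    \<comment> \<open>(D3)\<close>
    (\<exists>x b1 c1 d1 b2 c2 d2. dia E x b1 c1 d1 \<and> dia E x b2 c2 d2
       \<and> distinct [x, b1, c1, d1, b2, c2, d2]
       \<and> dg V E x = 6 \<and> dg V E b1 = 3 \<and> dg V E c1 = 4 \<and> dg V E d1 = 3
       \<and> dg V E b2 = 3 \<and> dg V E c2 = 4 \<and> dg V E d2 = 4
       \<and> S = {x, b1, c1, d1, b2, c2, d2}) \<or>
    \<comment> \<open>(D5)\<close>
    (\<exists>m1 m2 s1 s2. dia E m1 m2 s1 s2 \<and> dg V E m1 = 4 \<and> dg V E m2 = 5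
       \<and> dg V E s1 = 3 \<and> dg V E s2 = 3 \<and> S = {m1, m2, s1, s2}) \<or>
    \<comment> \<open>(D6)\<close>
    (\<exists>m1 m2 s1 s2. dia E m1 m2 s1 s2 \<and> dg V E m1 = 4 \<and> dg V E m2 = 3
       \<and> dg V E s1 = 4 \<and> dg V E s2 = 4 \<and> S = {m1, m2, s1, s2}) \<or>
    \<comment> \<open>(D7)\<close>
    (\<exists>m1 m2 s1 s2 w. dia E m1 m2 s1 s2 \<and> dg V E m1 = 5 \<and> dg V E m2 = 3
       \<and> dg V E s1 = 4 \<and> dg V E s2 = 4 \<and> w \<notin> {m1, m2, s1, s2} \<and> E w m1 \<and> dg V E w = 3
       \<and> S = {m1, m2, s1, s2, w}) \<or>
    \<comment> \<open>(D8)\<close>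
    (\<exists>m1 m2 s1 s2 w. dia E m1 m2 s1 s2 \<and> dg V E m1 = 5 \<and> dg V E m2 = 5
       \<and> dg V E s1 = 3 \<and> dg V E s2 = 3 \<and> w \<notin> {m1, m2, s1, s2} \<and> E w m1 \<and> dg V E w = 3
       \<and> S = {m1, m2, s1, s2, w}) \<or>
    \<comment> \<open>(D9)\<close>
    (\<exists>u v w. distinct [u, v, w] \<and> E u v \<and> E v w \<and> \<not> E u w
       \<and> dg V E u = 3 \<and> dg V E v = 3 \<and> dg V E w = 3 \<and> S = {u, v, w}) \<or>
    \<comment> \<open>(D10)\<close>
    (\<exists>m1 m2 s1 s2. dia E m1 m2 s1 s2 \<and> dg V E m1 = 5 \<and> dg V E m2 = 3
       \<and> dg V E s1 = 4 \<and> dg V E s2 = 3 \<and> S = {m1, m2, s1, s2}) \<or>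
    \<comment> \<open>(D11)\<close>
    (\<exists>a b c w. tri E a b c \<and> dg V E a = 5 \<and> dg V E b = 3 \<and> dg V E c = 3
       \<and> w \<notin> {a, b, c} \<and> E w a \<and> dg V E w = 3 \<and> S = {a, b, c, w}) \<or>
    \<comment> \<open>(D12)\<close>
    (\<exists>x a b c d. tri E x a b \<and> tri E x c d \<and> distinct [x, a, b, c, d]
       \<and> dg V E x = 6 \<and> dg V E a = 3 \<and> dg V E b = 3 \<and> dg V E c = 3 \<and> dg V E d = 3
       \<and> S = {x, a, b, c, d})"

end

theory Submission
  imports Defs
begin


lemma avail:
  assumes "finite B" "card B < card A"
  shows "\<exists>x\<in>A. x \<notin> B"
proof (rule ccontr)
  assume "\<not> ?thesis"
  then have "A \<subseteq> B" by blast
  then have "card A \<le> card B" using card_mono[OF assms(1)] by blast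
  with assms(2) show False by simp
qed

lemma col_step:
  assumes sym: "\<forall>u v. E u v \<longrightarrow> E v u" and irr: "\<forall>u. \<not> E u u"
    and col: "L_colorable E R L" and vR: "v \<notin> R" and fin: "finite R"
    and cardv: "card {u\<in>R. E v u} < card (L v)"
  shows "L_colorable E (insert v R) L"
proof -
  obtain c where c1: "\<forall>v\<in>R. c v \<in> L v" and c2: "\<forall>u\<in>R. \<forall>w\<in>R. E u w \<longrightarrow> c u \<noteq> c w"
    using col unfolding L_colorable_def by blast
  have "card (c ` {u\<in>R. E v u}) \<le> card {u\<in>R. E v u}" by (rule card_image_le) (use fin in auto)
  with cardv have "card (c ` {u\<in>R. E v u}) < card (L v)" by simp
  then obtain x where x: "x \<in> L v" "x \<notin> c ` {u\<in>R. E v u}"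
    using avail[of "c ` {u\<in>R. E v u}" "L v"] fin by auto
  define c' where "c' = c(v := x)"
  have "\<forall>w\<in>insert v R. c' w \<in> L w" using c1 x vR unfolding c'_def by (auto simp del: fun_upd_apply) (auto)
  moreover have "\<forall>u\<in>insert v R. \<forall>w\<in>insert v R. E u w \<longrightarrow> c' u \<noteq> c' w"
  proof (intro ballI impI)
    fix u w assume u: "u \<in> insert v R" and w: "w \<in> insert v R" and e: "E u w"
    show "c' u \<noteq> c' w"
    proof (cases "u = v")
      case True
      then have "w \<noteq> v" using e irr by auto
      moreover have wR: "w \<in> R" using w \<open>w \<noteq> v\<close> by auto
      moreover have "c w \<in> c ` {u\<in>R. E v u}" using wR e True by auto
      ultimately show ?thesis using True x unfolding c'_def by auto
    next
      case False
      then have uR: "u \<in> R" using u by auto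
      show ?thesis
      proof (cases "w = v")
        case True
        then have "E v u" using e sym by auto
        then show ?thesis using True x uR False unfolding c'_def by (auto simp: image_iff)
      next
        case False
        then show ?thesis using c2 uR w e \<open>u \<noteq> v\<close> unfolding c'_def by auto
      qed
    qed
  qed
  ultimately show ?thesis unfolding L_colorable_def by blast
qed

fun okl :: "('a \<Rightarrow> 'a \<Rightarrow> bool) \<Rightarrow> 'a set \<Rightarrow> ('a \<Rightarrow> int) \<Rightarrow> 'a set \<Rightarrow> ('a \<times> 'a list) list \<Rightarrow> bool" where
  "okl E S f R0 [] = True"
| "okl E S f R0 ((v,ks)#rest) = (v \<in> S \<and> v \<notin> R0 \<and> v \<notin> fst ` set rest
     \<and> set ks \<subseteq> S \<and> (\<forall>k\<in>set ks. k \<noteq> v \<and> k \<notin> R0 \<and> k \<notin> fst ` set rest \<and> E v k)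
     \<and> distinct ks
     \<and> (dg S E v < f v + int (length ks) \<or> (R0 = {} \<and> rest = [] \<and> 0 < f v))
     \<and> okl E S f R0 rest)"

lemma dg_split:
  assumes "finite S" "R \<subseteq> S" "set ks \<subseteq> S" "\<forall>k\<in>set ks. k \<notin> R \<and> E v k" "distinct ks"
  shows "int (card {u\<in>R. E v u}) + int (length ks) \<le> dg S E v"
proof -
  have "{u\<in>R. E v u} \<union> set ks \<subseteq> {u\<in>S. E v u}" using assms by auto
  then have "card ({u\<in>R. E v u} \<union> set ks) \<le> card {u\<in>S. E v u}"
    by (rule card_mono[rotated]) (use assms in auto)
  moreover have "card ({u\<in>R. E v u} \<union> set ks) = card {u\<in>R. E v u} + card (set ks)"
    by (rule card_Un_disjoint) (use assms rev_finite_subset[of S R] in auto)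
  ultimately show ?thesis using assms(5) distinct_card[of ks] unfolding dg_def by simp
qed

lemma dg_lower:
  assumes "finite S" "set ks \<subseteq> S" "\<forall>k\<in>set ks. E v k" "distinct ks"
  shows "int (length ks) \<le> dg S E v"
  using dg_split[of S "{}" ks E v] assms by simp

lemma okl_sub: "okl E S f R0 xs \<Longrightarrow> fst ` set xs \<subseteq> S"
  by (induction xs) (simp, fastforce)

lemma okl_col:
  assumes sym: "\<forall>u v. E u v \<longrightarrow> E v u" and irr: "\<forall>u. \<not> E u u"
    and fin: "finite S" and fa: "f_assignment S f L" and R0: "R0 \<subseteq> S"
    and c0: "L_colorable E R0 L"
  shows "okl E S f R0 xs \<Longrightarrow> L_colorable E (R0 \<union> fst ` set xs) L"
proof (induction xs)
  case Nil then show ?case using c0 by simp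
next
  case (Cons p rest)
  obtain v ks where p: "p = (v, ks)" by fastforce
  let ?R = "R0 \<union> fst ` set rest"
  have ok: "okl E S f R0 ((v,ks)#rest)" using Cons.prems p by simp
  then have IH: "L_colorable E ?R L" using Cons.IH by simp
  have vS: "v \<in> S" and vR: "v \<notin> ?R" using ok by auto
  have RS: "?R \<subseteq> S" using R0 okl_sub[of E S f R0 rest] ok by auto
  have finR: "finite ?R" using RS fin finite_subset by blast
  have fv: "finite (L v)" "f v \<le> int (card (L v))" using fa vS unfolding f_assignment_def by auto
  have "card {u\<in>?R. E v u} < card (L v)"
  proof -
    from ok have cond: "dg S E v < f v + int (length ks) \<or> (R0 = {} \<and> rest = [] \<and> 0 < f v)" by simp
    show ?thesis
    proof (cases "dg S E v < f v + int (length ks)")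
      case True
      have "int (card {u\<in>?R. E v u}) + int (length ks) \<le> dg S E v"
        by (rule dg_split) (use fin RS ok in auto)
      with True fv show ?thesis by linarith
    next
      case False
      with cond have "?R = {}" "0 < f v" by auto
      with fv show ?thesis by simp
    qed
  qed
  from col_step[OF sym irr IH vR finR this] show ?case using p by simp
qed

lemma okl_colS:
  assumes sym: "\<forall>u v. E u v \<longrightarrow> E v u" and irr: "\<forall>u. \<not> E u u"
    and fin: "finite S" and fa: "f_assignment S f L"
    and ok: "okl E S f {} xs" and eq: "fst ` set xs = S"
  shows "L_colorable E S L"
proof -
  have "L_colorable E {} L" unfolding L_colorable_def by simp
  from okl_col[OF sym irr fin fa _ this ok] eq show ?thesis by simp
qed




lemma card_le1: "finite I \<Longrightarrow> card I \<le> 1 \<Longrightarrow> I = {} \<or> (\<exists>v. I = {v})"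
  by (metis One_nat_def card_0_eq card_Suc_eq le_Suc_eq le_zero_eq)

lemma ewbr_intro:
  fixes S :: "'a set"
  assumes fin: "finite S" and vfix: "vfix \<in> S"
    and fixdeg: "dg V E vfix - dg S E vfix \<le> 1"
    and fixcol: "\<And>L. f_assignment S ((\<lambda>u. 4 - dg V E u + dg S E u)(vfix := 1)) L \<Longrightarrow> L_colorable E S L"
    and forb0: "\<And>L. f_assignment S (\<lambda>u. 4 - dg V E u + dg S E u - (if u \<in> {} then 1 else 0)) L \<Longrightarrow> L_colorable E S L"
    and forb1: "\<And>v L. v \<in> S \<Longrightarrow> F_free Fc E S {v} \<Longrightarrow>
        f_assignment S (\<lambda>u. 4 - dg V E u + dg S E u - (if u \<in> {v} then 1 else 0)) L \<Longrightarrow> L_colorable E S L"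
  shows "ewbr V E S Fc 4 S"
  unfolding ewbr_def
proof (intro conjI exI[of _ "{vfix}"])
  show "S \<noteq> {}" "S \<subseteq> S" "{vfix} \<noteq> {}" "{vfix} \<subseteq> S" using vfix by auto
  show "\<forall>v\<in>{vfix}. dg V E v - dg S E v \<le> 4 - 3 \<and>
       (\<forall>L. f_assignment S ((\<lambda>u. 4 - dg V E u + dg S E u)(v := 1)) L \<longrightarrow> L_colorable E S L)"
    using fixdeg fixcol by auto
  show "\<forall>I. F_free Fc E S I \<and> I \<subseteq> S \<and> int (card I) \<le> 4 - 3 \<longrightarrow>
        (\<forall>L. f_assignment S (\<lambda>u. 4 - dg V E u + dg S E u - (if u \<in> I then 1 else 0)) L \<longrightarrow>
             L_colorable E S L)"
  proof (intro allI impI)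
    fix I L
    assume a: "F_free Fc E S I \<and> I \<subseteq> S \<and> int (card I) \<le> 4 - 3"
      and fa: "f_assignment S (\<lambda>u. 4 - dg V E u + dg S E u - (if u \<in> I then 1 else 0)) L"
    have "finite I" using a fin finite_subset by blast
    then have "I = {} \<or> (\<exists>v. I = {v})" using card_le1 a by auto
    then show "L_colorable E S L"
    proof
      assume "I = {}" then show ?thesis using forb0 fa by simp
    next
      assume "\<exists>v. I = {v}"
      then obtain v where "I = {v}" by blast
      then show ?thesis using forb1[of v L] a fa by auto
    qed
  qed
qed

lemma sg_sym: "simple_graph V E \<Longrightarrow> \<forall>u v. E u v \<longrightarrow> E v u" unfolding simple_graph_def by blast
lemma sg_irr: "simple_graph V E \<Longrightarrow> \<forall>u. \<not> E u u" unfolding simple_graph_def by blast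




lemma card2: "card {a, b} \<le> 2" by (cases "a = b") auto
lemma card3: "card {a, b, c} \<le> 3"
proof -
  have "card (insert a {b, c}) \<le> Suc (card {b, c})" by (simp add: card_insert_if)
  then show ?thesis using card2[of b c] by simp
qed

lemma K4_free:
  assumes "F_free (contains_F l) E S I" "a \<in> S" "b \<in> S" "c \<in> S" "d \<in> S" "distinct [a, b, c, d]"
    "E a b" "E a c" "E a d" "E b c" "E b d" "E c d"
  shows False
proof -
  have "has_K4 (ext_vs S) (ext_adj E S I)"
    unfolding has_K4_def
    apply (rule exI[of _ "Some a"], rule exI[of _ "Some b"], rule exI[of _ "Some c"], rule exI[of _ "Some d"])
    using assms by (auto simp: ext_vs_def ext_adj_def)
  then show False using assms(1) unfolding F_free_def contains_F_def by blast
qed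

lemma dia_col:
  assumes sym: "\<forall>u v. E u v \<longrightarrow> E v u" and irr: "\<forall>u. \<not> E u u"
    and d: "distinct [m1, m2, s1, s2]" and ns: "\<not> E s1 s2"
    and f: "finite (L m1)" "finite (L m2)" "finite (L s1)" "finite (L s2)"
    and c: "3 \<le> card (L m1)" "3 \<le> card (L m2)" "2 \<le> card (L s1)" "2 \<le> card (L s2)"
  shows "L_colorable E {m1, m2, s1, s2} L"
proof -
  have "\<exists>x y a b. x \<in> L m1 \<and> y \<in> L m2 \<and> a \<in> L s1 \<and> b \<in> L s2 \<and> x \<noteq> y \<and> x \<noteq> a \<and> x \<noteq> b
     \<and> y \<noteq> a \<and> y \<noteq> b"
  proof (cases "\<exists>a. a \<in> L s1 \<and> a \<in> L s2")
    case True
    then obtain a where a: "a \<in> L s1" "a \<in> L s2" by blast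
    obtain x where x: "x \<in> L m1" "x \<notin> {a}" using avail[of "{a}" "L m1"] c by auto
    obtain y where y: "y \<in> L m2" "y \<notin> {a, x}" using avail[of "{a, x}" "L m2"] c card2[of a x] by auto
    show ?thesis using a x y by blast
  next
    case nI: False
    show ?thesis
    proof (cases "\<exists>a\<in>L s1. a \<notin> L m1")
      case True
      then obtain a where a: "a \<in> L s1" "a \<notin> L m1" by blast
      obtain b where b: "b \<in> L s2" using avail[of "{}" "L s2"] c by auto
      obtain y where y: "y \<in> L m2" "y \<notin> {a, b}" using avail[of "{a, b}" "L m2"] c card2[of a b] by auto
      obtain x where x: "x \<in> L m1" "x \<notin> {b, y}" using avail[of "{b, y}" "L m1"] c card2[of b y] by auto
      show ?thesis using a b x y by blast
    next
      case nB: False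
      show ?thesis
      proof (cases "\<exists>b\<in>L s2. b \<notin> L m1")
        case True
        then obtain b where b: "b \<in> L s2" "b \<notin> L m1" by blast
        obtain a where a: "a \<in> L s1" using avail[of "{}" "L s1"] c by auto
        obtain y where y: "y \<in> L m2" "y \<notin> {a, b}" using avail[of "{a, b}" "L m2"] c card2[of a b] by auto
        obtain x where x: "x \<in> L m1" "x \<notin> {a, y}" using avail[of "{a, y}" "L m1"] c card2[of a y] by auto
        show ?thesis using a b x y by blast
      next
        case False
        then have sub: "L s1 \<union> L s2 \<subseteq> L m1" using nB by blast
        have "card (L s1 \<union> L s2) = card (L s1) + card (L s2)"
          by (rule card_Un_disjoint) (use f nI in auto)
        moreover have "card (L s1 \<union> L s2) \<le> card (L m1)" using card_mono[OF f(1) sub] .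
        ultimately have c4: "4 \<le> card (L m1)" using c by simp
        obtain a where a: "a \<in> L s1" using avail[of "{}" "L s1"] c by auto
        obtain b where b: "b \<in> L s2" using avail[of "{}" "L s2"] c by auto
        obtain y where y: "y \<in> L m2" "y \<notin> {a, b}" using avail[of "{a, b}" "L m2"] c card2[of a b] by auto
        obtain x where x: "x \<in> L m1" "x \<notin> {a, b, y}" using avail[of "{a, b, y}" "L m1"] c4 card3[of a b y] by auto
        show ?thesis using a b x y by blast
      qed
    qed
  qed
  then obtain x y a b where xy: "x \<in> L m1" "y \<in> L m2" "a \<in> L s1" "b \<in> L s2" "x \<noteq> y" "x \<noteq> a" "x \<noteq> b"
     "y \<noteq> a" "y \<noteq> b" by blast
  define col where "col u = (if u = m1 then x else if u = m2 then y else if u = s1 then a else b)" for u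
  have "\<forall>v\<in>{m1, m2, s1, s2}. col v \<in> L v" using xy d unfolding col_def by auto
  moreover have "\<forall>u\<in>{m1, m2, s1, s2}. \<forall>v\<in>{m1, m2, s1, s2}. E u v \<longrightarrow> col u \<noteq> col v"
    using xy d irr ns sym unfolding col_def by auto
  ultimately show ?thesis unfolding L_colorable_def by blast
qed



lemma D2a:
  assumes sg: "simple_graph V E" and hS: "S = {a, b, c}"
    and h: "tri E a b c"
    and g: "dg V E a = 3" "dg V E b = 3" "dg V E c = 3"
  shows "ewbr V E S (contains_F l) 4 S"
proof -
  note sym = sg_sym[OF sg] and irr = sg_irr[OF sg]
  have fin: "finite {a, b, c}" by simp
  have d: "distinct [a, b, c]" using h unfolding dia_def tri_def by auto
  have e: "E a b" "E b c" "E a c" using h unfolding dia_def tri_def by auto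
  have e': "E b a" "E c b" "E c a" using e sym by auto
  note H = d e e' g
  show ?thesis unfolding hS
    apply (rule ewbr_intro[where vfix=a, OF fin])
    subgoal by simp
    subgoal using dg_lower[of "{a, b, c}" "[b, c]" E a] H by auto
    subgoal for LL by (rule okl_colS[where xs="[(c,[]), (b,[c]), (a,[b, c])]", OF sym irr fin]) (use H in auto)
    subgoal for LL by (rule okl_colS[where xs="[(c,[]), (b,[c]), (a,[b, c])]", OF sym irr fin]) (use H in auto)
    subgoal premises prems for vv LL
    proof -
      have "vv = a \<or> vv = b \<or> vv = c" using prems(1) by auto
      then show ?thesis
      proof (elim disjE)
        assume [simp]: "vv = a"
        show ?thesis by (rule okl_colS[where xs="[(c,[]), (b,[c]), (a,[b, c])]", OF sym irr fin prems(3)]) (use H in auto)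
      next
        assume [simp]: "vv = b"
        show ?thesis by (rule okl_colS[where xs="[(c,[]), (b,[c]), (a,[b, c])]", OF sym irr fin prems(3)]) (use H in auto)
      next
        assume [simp]: "vv = c"
        show ?thesis by (rule okl_colS[where xs="[(b,[]), (c,[b]), (a,[c, b])]", OF sym irr fin prems(3)]) (use H in auto)
      qed
    qed
    done
qed

lemma D2b:
  assumes sg: "simple_graph V E" and hS: "S = {a, b, c}"
    and h: "tri E a b c"
    and g: "dg V E a = 3" "dg V E b = 3" "dg V E c = 4"
  shows "ewbr V E S (contains_F l) 4 S"
proof -
  note sym = sg_sym[OF sg] and irr = sg_irr[OF sg]
  have fin: "finite {a, b, c}" by simp
  have d: "distinct [a, b, c]" using h unfolding dia_def tri_def by auto
  have e: "E a b" "E b c" "E a c" using h unfolding dia_def tri_def by auto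
  have e': "E b a" "E c b" "E c a" using e sym by auto
  note H = d e e' g
  show ?thesis unfolding hS
    apply (rule ewbr_intro[where vfix=a, OF fin])
    subgoal by simp
    subgoal using dg_lower[of "{a, b, c}" "[b, c]" E a] H by auto
    subgoal for LL by (rule okl_colS[where xs="[(b,[]), (c,[b]), (a,[c, b])]", OF sym irr fin]) (use H in auto)
    subgoal for LL by (rule okl_colS[where xs="[(b,[]), (c,[b]), (a,[c, b])]", OF sym irr fin]) (use H in auto)
    subgoal premises prems for vv LL
    proof -
      have "vv = a \<or> vv = b \<or> vv = c" using prems(1) by auto
      then show ?thesis
      proof (elim disjE)
        assume [simp]: "vv = a"
        show ?thesis by (rule okl_colS[where xs="[(b,[]), (c,[b]), (a,[c, b])]", OF sym irr fin prems(3)]) (use H in auto)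
      next
        assume [simp]: "vv = b"
        show ?thesis by (rule okl_colS[where xs="[(a,[]), (c,[a]), (b,[c, a])]", OF sym irr fin prems(3)]) (use H in auto)
      next
        assume [simp]: "vv = c"
        show ?thesis by (rule okl_colS[where xs="[(b,[]), (a,[b]), (c,[a, b])]", OF sym irr fin prems(3)]) (use H in auto)
      qed
    qed
    done
qed

lemma D3:
  assumes sg: "simple_graph V E" and hS: "S = {x, b1, c1, d1, b2, c2, d2}"
    and h: "dia E x b1 c1 d1" "dia E x b2 c2 d2" "distinct [x, b1, c1, d1, b2, c2, d2]"
    and g: "dg V E x = 6" "dg V E b1 = 3" "dg V E c1 = 4" "dg V E d1 = 3" "dg V E b2 = 3" "dg V E c2 = 4" "dg V E d2 = 4"
  shows "ewbr V E S (contains_F l) 4 S"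
proof -
  note sym = sg_sym[OF sg] and irr = sg_irr[OF sg]
  have fin: "finite {x, b1, c1, d1, b2, c2, d2}" by simp
  have d: "distinct [x, b1, c1, d1, b2, c2, d2]" using h unfolding dia_def tri_def by auto
  have e: "E x b1" "E x c1" "E x d1" "E b1 c1" "E b1 d1" "E x b2" "E x c2" "E x d2" "E b2 c2" "E b2 d2" using h unfolding dia_def tri_def by auto
  have e': "E b1 x" "E c1 x" "E d1 x" "E c1 b1" "E d1 b1" "E b2 x" "E c2 x" "E d2 x" "E c2 b2" "E d2 b2" using e sym by auto
  note H = d e e' g
  show ?thesis unfolding hS
    apply (rule ewbr_intro[where vfix=x, OF fin])
    subgoal by simp
    subgoal using dg_lower[of "{x, b1, c1, d1, b2, c2, d2}" "[b1, c1, d1, b2, c2, d2]" E x] H by auto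
    subgoal for LL by (rule okl_colS[where xs="[(b2,[]), (d2,[b2]), (c2,[b2]), (d1,[]), (b1,[d1]), (c1,[b1]), (x,[c1, b1, d1, c2, d2, b2])]", OF sym irr fin]) (use H in auto)
    subgoal for LL by (rule okl_colS[where xs="[(b2,[]), (d2,[b2]), (c2,[b2]), (d1,[]), (b1,[d1]), (c1,[b1]), (x,[c1, b1, d1, c2, d2, b2])]", OF sym irr fin]) (use H in auto)
    subgoal premises prems for vv LL
    proof -
      have "vv = x \<or> vv = b1 \<or> vv = c1 \<or> vv = d1 \<or> vv = b2 \<or> vv = c2 \<or> vv = d2" using prems(1) by auto
      then show ?thesis
      proof (elim disjE)
        assume [simp]: "vv = x"
        show ?thesis by (rule okl_colS[where xs="[(b2,[]), (d2,[b2]), (c2,[b2]), (d1,[]), (b1,[d1]), (c1,[b1]), (x,[c1, b1, d1, c2, d2, b2])]", OF sym irr fin prems(3)]) (use H in auto)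
      next
        assume [simp]: "vv = b1"
        show ?thesis by (rule okl_colS[where xs="[(b2,[]), (d2,[b2]), (c2,[b2]), (d1,[]), (b1,[d1]), (c1,[b1]), (x,[c1, b1, d1, c2, d2, b2])]", OF sym irr fin prems(3)]) (use H in auto)
      next
        assume [simp]: "vv = c1"
        show ?thesis by (rule okl_colS[where xs="[(b2,[]), (d2,[b2]), (c2,[b2]), (d1,[]), (b1,[d1]), (x,[b1, d1, c2, d2, b2]), (c1,[x, b1])]", OF sym irr fin prems(3)]) (use H in auto)
      next
        assume [simp]: "vv = d1"
        show ?thesis by (rule okl_colS[where xs="[(b2,[]), (d2,[b2]), (c2,[b2]), (b1,[]), (d1,[b1]), (c1,[b1]), (x,[c1, d1, b1, c2, d2, b2])]", OF sym irr fin prems(3)]) (use H in auto)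
      next
        assume [simp]: "vv = b2"
        show ?thesis by (rule okl_colS[where xs="[(d1,[]), (b1,[d1]), (c1,[b1]), (x,[c1, b1, d1]), (d2,[x]), (c2,[x]), (b2,[c2, d2, x])]", OF sym irr fin prems(3)]) (use H in auto)
      next
        assume [simp]: "vv = c2"
        show ?thesis by (rule okl_colS[where xs="[(b2,[]), (d2,[b2]), (d1,[]), (x,[d1, d2, b2]), (c2,[x, b2]), (c1,[x]), (b1,[c1, x, d1])]", OF sym irr fin prems(3)]) (use H in auto)
      next
        assume [simp]: "vv = d2"
        show ?thesis by (rule okl_colS[where xs="[(b2,[]), (c2,[b2]), (d1,[]), (x,[d1, c2, b2]), (d2,[x, b2]), (c1,[x]), (b1,[c1, x, d1])]", OF sym irr fin prems(3)]) (use H in auto)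
      qed
    qed
    done
qed

lemma D5:
  assumes sg: "simple_graph V E" and hS: "S = {m1, m2, s1, s2}"
    and h: "dia E m1 m2 s1 s2"
    and g: "dg V E m1 = 4" "dg V E m2 = 5" "dg V E s1 = 3" "dg V E s2 = 3"
  shows "ewbr V E S (contains_F l) 4 S"
proof -
  note sym = sg_sym[OF sg] and irr = sg_irr[OF sg]
  have fin: "finite {m1, m2, s1, s2}" by simp
  have d: "distinct [m1, m2, s1, s2]" using h unfolding dia_def tri_def by auto
  have e: "E m1 m2" "E m1 s1" "E m1 s2" "E m2 s1" "E m2 s2" using h unfolding dia_def tri_def by auto
  have e': "E m2 m1" "E s1 m1" "E s2 m1" "E s1 m2" "E s2 m2" using e sym by auto
  note H = d e e' g
  show ?thesis unfolding hS
    apply (rule ewbr_intro[where vfix=m1, OF fin])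
    subgoal by simp
    subgoal using dg_lower[of "{m1, m2, s1, s2}" "[m2, s1, s2]" E m1] H by auto
    subgoal for LL by (rule okl_colS[where xs="[(s2,[]), (s1,[]), (m2,[s1, s2]), (m1,[m2, s1, s2])]", OF sym irr fin]) (use H in auto)
    subgoal for LL by (rule okl_colS[where xs="[(s2,[]), (s1,[]), (m2,[s1, s2]), (m1,[m2, s1, s2])]", OF sym irr fin]) (use H in auto)
    subgoal premises prems for vv LL
    proof -
      have "vv = m1 \<or> vv = m2 \<or> vv = s1 \<or> vv = s2" using prems(1) by auto
      then show ?thesis
      proof (elim disjE)
        assume [simp]: "vv = m1"
        show ?thesis by (rule okl_colS[where xs="[(s2,[]), (s1,[]), (m2,[s1, s2]), (m1,[m2, s1, s2])]", OF sym irr fin prems(3)]) (use H in auto)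
      next
        assume [simp]: "vv = m2"
        show ?thesis by (rule okl_colS[where xs="[(s2,[]), (s1,[]), (m1,[s1, s2]), (m2,[m1, s1, s2])]", OF sym irr fin prems(3)]) (use H in auto)
      next
        assume [simp]: "vv = s1"
        show ?thesis by (rule okl_colS[where xs="[(s2,[]), (m1,[s2]), (s1,[m1]), (m2,[s1, m1, s2])]", OF sym irr fin prems(3)]) (use H in auto)
      next
        assume [simp]: "vv = s2"
        show ?thesis by (rule okl_colS[where xs="[(s1,[]), (m1,[s1]), (s2,[m1]), (m2,[s2, m1, s1])]", OF sym irr fin prems(3)]) (use H in auto)
      qed
    qed
    done
qed

lemma D6:
  assumes sg: "simple_graph V E" and hS: "S = {m1, m2, s1, s2}"
    and h: "dia E m1 m2 s1 s2"
    and g: "dg V E m1 = 4" "dg V E m2 = 3" "dg V E s1 = 4" "dg V E s2 = 4"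
  shows "ewbr V E S (contains_F l) 4 S"
proof -
  note sym = sg_sym[OF sg] and irr = sg_irr[OF sg]
  have fin: "finite {m1, m2, s1, s2}" by simp
  have d: "distinct [m1, m2, s1, s2]" using h unfolding dia_def tri_def by auto
  have e: "E m1 m2" "E m1 s1" "E m1 s2" "E m2 s1" "E m2 s2" using h unfolding dia_def tri_def by auto
  have e': "E m2 m1" "E s1 m1" "E s2 m1" "E s1 m2" "E s2 m2" using e sym by auto
  note H = d e e' g
  show ?thesis unfolding hS
    apply (rule ewbr_intro[where vfix=m1, OF fin])
    subgoal by simp
    subgoal using dg_lower[of "{m1, m2, s1, s2}" "[m2, s1, s2]" E m1] H by auto
    subgoal for LL by (rule okl_colS[where xs="[(m2,[]), (s2,[m2]), (s1,[m2]), (m1,[s1, s2, m2])]", OF sym irr fin]) (use H in auto)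
    subgoal for LL by (rule okl_colS[where xs="[(m2,[]), (s2,[m2]), (s1,[m2]), (m1,[s1, s2, m2])]", OF sym irr fin]) (use H in auto)
    subgoal premises prems for vv LL
    proof -
      have "vv = m1 \<or> vv = m2 \<or> vv = s1 \<or> vv = s2" using prems(1) by auto
      then show ?thesis
      proof (elim disjE)
        assume [simp]: "vv = m1"
        show ?thesis by (rule okl_colS[where xs="[(m2,[]), (s2,[m2]), (s1,[m2]), (m1,[s1, s2, m2])]", OF sym irr fin prems(3)]) (use H in auto)
      next
        assume [simp]: "vv = m2"
        show ?thesis proof -
          have ns: "\<not> E s1 s2"
          proof
            assume "E s1 s2"
            then show False using K4_free[OF prems(2), of m1 m2 s1 s2] H by auto
          qed
          have fa: "\<forall>u\<in>{m1, m2, s1, s2}. finite (LL u) \<and> 4 - dg V E u + dg {m1, m2, s1, s2} E u - (if u \<in> {vv} then 1 else 0) \<le> int (card (LL u))"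
            using prems(3) unfolding f_assignment_def by blast
          have "int (length [m2, s1, s2]) \<le> dg {m1, m2, s1, s2} E m1" by (rule dg_lower) (use H in auto)
          then have c_m1: "finite (LL m1)" "3 \<le> card (LL m1)" using fa[rule_format, of m1] H by auto
          have "int (length [m1, s1, s2]) \<le> dg {m1, m2, s1, s2} E m2" by (rule dg_lower) (use H in auto)
          then have c_m2: "finite (LL m2)" "3 \<le> card (LL m2)" using fa[rule_format, of m2] H by auto
          have "int (length [m1, m2]) \<le> dg {m1, m2, s1, s2} E s1" by (rule dg_lower) (use H in auto)
          then have c_s1: "finite (LL s1)" "2 \<le> card (LL s1)" using fa[rule_format, of s1] H by auto
          have "int (length [m1, m2]) \<le> dg {m1, m2, s1, s2} E s2" by (rule dg_lower) (use H in auto)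
          then have c_s2: "finite (LL s2)" "2 \<le> card (LL s2)" using fa[rule_format, of s2] H by auto
          have c0: "L_colorable E {m1, m2, s1, s2} LL" by (rule dia_col[OF sym irr _ ns]) (use H c_m1 c_m2 c_s1 c_s2 in auto)
          then show ?thesis by (simp add: insert_commute)
        qed
      next
        assume [simp]: "vv = s1"
        show ?thesis by (rule okl_colS[where xs="[(m2,[]), (s2,[m2]), (m1,[s2, m2]), (s1,[m1, m2])]", OF sym irr fin prems(3)]) (use H in auto)
      next
        assume [simp]: "vv = s2"
        show ?thesis by (rule okl_colS[where xs="[(m2,[]), (m1,[m2]), (s2,[m1, m2]), (s1,[m1, m2])]", OF sym irr fin prems(3)]) (use H in auto)
      qed
    qed
    done
qed

lemma D7:
  assumes sg: "simple_graph V E" and hS: "S = {m1, m2, s1, s2, w}"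
    and h: "dia E m1 m2 s1 s2" "w \<notin> {m1, m2, s1, s2}" "E w m1"
    and g: "dg V E m1 = 5" "dg V E m2 = 3" "dg V E s1 = 4" "dg V E s2 = 4" "dg V E w = 3"
  shows "ewbr V E S (contains_F l) 4 S"
proof -
  note sym = sg_sym[OF sg] and irr = sg_irr[OF sg]
  have fin: "finite {m1, m2, s1, s2, w}" by simp
  have d: "distinct [m1, m2, s1, s2, w]" using h unfolding dia_def tri_def by auto
  have e: "E m1 m2" "E m1 s1" "E m1 s2" "E m2 s1" "E m2 s2" "E w m1" using h unfolding dia_def tri_def by auto
  have e': "E m2 m1" "E s1 m1" "E s2 m1" "E s1 m2" "E s2 m2" "E m1 w" using e sym by auto
  note H = d e e' g
  show ?thesis unfolding hS
    apply (rule ewbr_intro[where vfix=m1, OF fin])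
    subgoal by simp
    subgoal using dg_lower[of "{m1, m2, s1, s2, w}" "[m2, s1, s2, w]" E m1] H by auto
    subgoal for LL by (rule okl_colS[where xs="[(w,[]), (m2,[]), (s2,[m2]), (s1,[m2]), (m1,[s1, s2, m2, w])]", OF sym irr fin]) (use H in auto)
    subgoal for LL by (rule okl_colS[where xs="[(w,[]), (m2,[]), (s2,[m2]), (s1,[m2]), (m1,[s1, s2, m2, w])]", OF sym irr fin]) (use H in auto)
    subgoal premises prems for vv LL
    proof -
      have "vv = m1 \<or> vv = m2 \<or> vv = s1 \<or> vv = s2 \<or> vv = w" using prems(1) by auto
      then show ?thesis
      proof (elim disjE)
        assume [simp]: "vv = m1"
        show ?thesis by (rule okl_colS[where xs="[(w,[]), (m2,[]), (s2,[m2]), (s1,[m2]), (m1,[s1, s2, m2, w])]", OF sym irr fin prems(3)]) (use H in auto)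
      next
        assume [simp]: "vv = m2"
        show ?thesis proof -
          have ns: "\<not> E s1 s2"
          proof
            assume "E s1 s2"
            then show False using K4_free[OF prems(2), of m1 m2 s1 s2] H by auto
          qed
          have fa: "\<forall>u\<in>{m1, m2, s1, s2, w}. finite (LL u) \<and> 4 - dg V E u + dg {m1, m2, s1, s2, w} E u - (if u \<in> {vv} then 1 else 0) \<le> int (card (LL u))"
            using prems(3) unfolding f_assignment_def by blast
          have "int (length [m2, s1, s2, w]) \<le> dg {m1, m2, s1, s2, w} E m1" by (rule dg_lower) (use H in auto)
          then have c_m1: "finite (LL m1)" "3 \<le> card (LL m1)" using fa[rule_format, of m1] H by auto
          have "int (length [m1, s1, s2]) \<le> dg {m1, m2, s1, s2, w} E m2" by (rule dg_lower) (use H in auto)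
          then have c_m2: "finite (LL m2)" "3 \<le> card (LL m2)" using fa[rule_format, of m2] H by auto
          have "int (length [m1, m2]) \<le> dg {m1, m2, s1, s2, w} E s1" by (rule dg_lower) (use H in auto)
          then have c_s1: "finite (LL s1)" "2 \<le> card (LL s1)" using fa[rule_format, of s1] H by auto
          have "int (length [m1, m2]) \<le> dg {m1, m2, s1, s2, w} E s2" by (rule dg_lower) (use H in auto)
          then have c_s2: "finite (LL s2)" "2 \<le> card (LL s2)" using fa[rule_format, of s2] H by auto
          have c0: "L_colorable E {m1, m2, s1, s2} LL" by (rule dia_col[OF sym irr _ ns]) (use H c_m1 c_m2 c_s1 c_s2 in auto)
          have "L_colorable E ({m1, m2, s1, s2} \<union> {w}) LL" using okl_col[OF sym irr fin prems(3) _ c0, of "[(w, [])]"] H by auto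
          moreover have "{m1, m2, s1, s2} \<union> {w} = {m1, m2, s1, s2, w}" by auto
          ultimately show ?thesis by simp
        qed
      next
        assume [simp]: "vv = s1"
        show ?thesis by (rule okl_colS[where xs="[(w,[]), (m2,[]), (s2,[m2]), (m1,[s2, m2, w]), (s1,[m1, m2])]", OF sym irr fin prems(3)]) (use H in auto)
      next
        assume [simp]: "vv = s2"
        show ?thesis by (rule okl_colS[where xs="[(w,[]), (m2,[]), (m1,[m2, w]), (s2,[m1, m2]), (s1,[m1, m2])]", OF sym irr fin prems(3)]) (use H in auto)
      next
        assume [simp]: "vv = w"
        show ?thesis by (rule okl_colS[where xs="[(m2,[]), (s2,[m2]), (m1,[s2, m2]), (w,[m1]), (s1,[m1, m2])]", OF sym irr fin prems(3)]) (use H in auto)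
      qed
    qed
    done
qed

lemma D8:
  assumes sg: "simple_graph V E" and hS: "S = {m1, m2, s1, s2, w}"
    and h: "dia E m1 m2 s1 s2" "w \<notin> {m1, m2, s1, s2}" "E w m1"
    and g: "dg V E m1 = 5" "dg V E m2 = 5" "dg V E s1 = 3" "dg V E s2 = 3" "dg V E w = 3"
  shows "ewbr V E S (contains_F l) 4 S"
proof -
  note sym = sg_sym[OF sg] and irr = sg_irr[OF sg]
  have fin: "finite {m1, m2, s1, s2, w}" by simp
  have d: "distinct [m1, m2, s1, s2, w]" using h unfolding dia_def tri_def by auto
  have e: "E m1 m2" "E m1 s1" "E m1 s2" "E m2 s1" "E m2 s2" "E w m1" using h unfolding dia_def tri_def by auto
  have e': "E m2 m1" "E s1 m1" "E s2 m1" "E s1 m2" "E s2 m2" "E m1 w" using e sym by auto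
  note H = d e e' g
  show ?thesis unfolding hS
    apply (rule ewbr_intro[where vfix=m1, OF fin])
    subgoal by simp
    subgoal using dg_lower[of "{m1, m2, s1, s2, w}" "[m2, s1, s2, w]" E m1] H by auto
    subgoal for LL by (rule okl_colS[where xs="[(w,[]), (s2,[]), (s1,[]), (m2,[s1, s2]), (m1,[m2, s1, s2, w])]", OF sym irr fin]) (use H in auto)
    subgoal for LL by (rule okl_colS[where xs="[(w,[]), (s2,[]), (s1,[]), (m2,[s1, s2]), (m1,[m2, s1, s2, w])]", OF sym irr fin]) (use H in auto)
    subgoal premises prems for vv LL
    proof -
      have "vv = m1 \<or> vv = m2 \<or> vv = s1 \<or> vv = s2 \<or> vv = w" using prems(1) by auto
      then show ?thesis
      proof (elim disjE)
        assume [simp]: "vv = m1"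
        show ?thesis by (rule okl_colS[where xs="[(w,[]), (s2,[]), (s1,[]), (m2,[s1, s2]), (m1,[m2, s1, s2, w])]", OF sym irr fin prems(3)]) (use H in auto)
      next
        assume [simp]: "vv = m2"
        show ?thesis by (rule okl_colS[where xs="[(w,[]), (s2,[]), (s1,[]), (m1,[s1, s2, w]), (m2,[m1, s1, s2])]", OF sym irr fin prems(3)]) (use H in auto)
      next
        assume [simp]: "vv = s1"
        show ?thesis by (rule okl_colS[where xs="[(w,[]), (s2,[]), (m1,[s2, w]), (s1,[m1]), (m2,[s1, m1, s2])]", OF sym irr fin prems(3)]) (use H in auto)
      next
        assume [simp]: "vv = s2"
        show ?thesis by (rule okl_colS[where xs="[(w,[]), (s1,[]), (m1,[s1, w]), (s2,[m1]), (m2,[s2, m1, s1])]", OF sym irr fin prems(3)]) (use H in auto)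
      next
        assume [simp]: "vv = w"
        show ?thesis by (rule okl_colS[where xs="[(s2,[]), (s1,[]), (m1,[s1, s2]), (w,[m1]), (m2,[m1, s1, s2])]", OF sym irr fin prems(3)]) (use H in auto)
      qed
    qed
    done
qed

lemma D9:
  assumes sg: "simple_graph V E" and hS: "S = {u, v, w}"
    and h: "distinct [u, v, w]" "E u v" "E v w"
    and g: "dg V E u = 3" "dg V E v = 3" "dg V E w = 3"
  shows "ewbr V E S (contains_F l) 4 S"
proof -
  note sym = sg_sym[OF sg] and irr = sg_irr[OF sg]
  have fin: "finite {u, v, w}" by simp
  have d: "distinct [u, v, w]" using h unfolding dia_def tri_def by auto
  have e: "E u v" "E v w" using h unfolding dia_def tri_def by auto
  have e': "E v u" "E w v" using e sym by auto
  note H = d e e' g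
  show ?thesis unfolding hS
    apply (rule ewbr_intro[where vfix=v, OF fin])
    subgoal by simp
    subgoal using dg_lower[of "{u, v, w}" "[u, w]" E v] H by auto
    subgoal for LL by (rule okl_colS[where xs="[(w,[]), (u,[]), (v,[u, w])]", OF sym irr fin]) (use H in auto)
    subgoal for LL by (rule okl_colS[where xs="[(w,[]), (v,[w]), (u,[v])]", OF sym irr fin]) (use H in auto)
    subgoal premises prems for vv LL
    proof -
      have "vv = u \<or> vv = v \<or> vv = w" using prems(1) by auto
      then show ?thesis
      proof (elim disjE)
        assume [simp]: "vv = u"
        show ?thesis by (rule okl_colS[where xs="[(w,[]), (v,[w]), (u,[v])]", OF sym irr fin prems(3)]) (use H in auto)
      next
        assume [simp]: "vv = v"
        show ?thesis by (rule okl_colS[where xs="[(w,[]), (v,[w]), (u,[v])]", OF sym irr fin prems(3)]) (use H in auto)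
      next
        assume [simp]: "vv = w"
        show ?thesis by (rule okl_colS[where xs="[(v,[]), (w,[v]), (u,[v])]", OF sym irr fin prems(3)]) (use H in auto)
      qed
    qed
    done
qed

lemma D10:
  assumes sg: "simple_graph V E" and hS: "S = {m1, m2, s1, s2}"
    and h: "dia E m1 m2 s1 s2"
    and g: "dg V E m1 = 5" "dg V E m2 = 3" "dg V E s1 = 4" "dg V E s2 = 3"
  shows "ewbr V E S (contains_F l) 4 S"
proof -
  note sym = sg_sym[OF sg] and irr = sg_irr[OF sg]
  have fin: "finite {m1, m2, s1, s2}" by simp
  have d: "distinct [m1, m2, s1, s2]" using h unfolding dia_def tri_def by auto
  have e: "E m1 m2" "E m1 s1" "E m1 s2" "E m2 s1" "E m2 s2" using h unfolding dia_def tri_def by auto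
  have e': "E m2 m1" "E s1 m1" "E s2 m1" "E s1 m2" "E s2 m2" using e sym by auto
  note H = d e e' g
  show ?thesis unfolding hS
    apply (rule ewbr_intro[where vfix=s2, OF fin])
    subgoal by simp
    subgoal using dg_lower[of "{m1, m2, s1, s2}" "[m1, m2]" E s2] H by auto
    subgoal for LL by (rule okl_colS[where xs="[(m2,[]), (s1,[m2]), (m1,[s1, m2]), (s2,[m1, m2])]", OF sym irr fin]) (use H in auto)
    subgoal for LL by (rule okl_colS[where xs="[(s2,[]), (m2,[s2]), (s1,[m2]), (m1,[s1, m2, s2])]", OF sym irr fin]) (use H in auto)
    subgoal premises prems for vv LL
    proof -
      have "vv = m1 \<or> vv = m2 \<or> vv = s1 \<or> vv = s2" using prems(1) by auto
      then show ?thesis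
      proof (elim disjE)
        assume [simp]: "vv = m1"
        show ?thesis by (rule okl_colS[where xs="[(s2,[]), (m2,[s2]), (s1,[m2]), (m1,[s1, m2, s2])]", OF sym irr fin prems(3)]) (use H in auto)
      next
        assume [simp]: "vv = m2"
        show ?thesis by (rule okl_colS[where xs="[(s2,[]), (m2,[s2]), (s1,[m2]), (m1,[s1, m2, s2])]", OF sym irr fin prems(3)]) (use H in auto)
      next
        assume [simp]: "vv = s1"
        show ?thesis by (rule okl_colS[where xs="[(s2,[]), (m2,[s2]), (m1,[m2, s2]), (s1,[m1, m2])]", OF sym irr fin prems(3)]) (use H in auto)
      next
        assume [simp]: "vv = s2"
        show ?thesis by (rule okl_colS[where xs="[(m2,[]), (s2,[m2]), (s1,[m2]), (m1,[s1, s2, m2])]", OF sym irr fin prems(3)]) (use H in auto)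
      qed
    qed
    done
qed

lemma D11:
  assumes sg: "simple_graph V E" and hS: "S = {a, b, c, w}"
    and h: "tri E a b c" "w \<notin> {a, b, c}" "E w a"
    and g: "dg V E a = 5" "dg V E b = 3" "dg V E c = 3" "dg V E w = 3"
  shows "ewbr V E S (contains_F l) 4 S"
proof -
  note sym = sg_sym[OF sg] and irr = sg_irr[OF sg]
  have fin: "finite {a, b, c, w}" by simp
  have d: "distinct [a, b, c, w]" using h unfolding dia_def tri_def by auto
  have e: "E a b" "E b c" "E a c" "E w a" using h unfolding dia_def tri_def by auto
  have e': "E b a" "E c b" "E c a" "E a w" using e sym by auto
  note H = d e e' g
  show ?thesis unfolding hS
    apply (rule ewbr_intro[where vfix=b, OF fin])
    subgoal by simp
    subgoal using dg_lower[of "{a, b, c, w}" "[a, c]" E b] H by auto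
    subgoal for LL by (rule okl_colS[where xs="[(w,[]), (c,[]), (a,[c, w]), (b,[a, c])]", OF sym irr fin]) (use H in auto)
    subgoal for LL by (rule okl_colS[where xs="[(w,[]), (c,[]), (b,[c]), (a,[b, c, w])]", OF sym irr fin]) (use H in auto)
    subgoal premises prems for vv LL
    proof -
      have "vv = a \<or> vv = b \<or> vv = c \<or> vv = w" using prems(1) by auto
      then show ?thesis
      proof (elim disjE)
        assume [simp]: "vv = a"
        show ?thesis by (rule okl_colS[where xs="[(w,[]), (c,[]), (b,[c]), (a,[b, c, w])]", OF sym irr fin prems(3)]) (use H in auto)
      next
        assume [simp]: "vv = b"
        show ?thesis by (rule okl_colS[where xs="[(w,[]), (c,[]), (b,[c]), (a,[b, c, w])]", OF sym irr fin prems(3)]) (use H in auto)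
      next
        assume [simp]: "vv = c"
        show ?thesis by (rule okl_colS[where xs="[(w,[]), (b,[]), (c,[b]), (a,[c, b, w])]", OF sym irr fin prems(3)]) (use H in auto)
      next
        assume [simp]: "vv = w"
        show ?thesis by (rule okl_colS[where xs="[(c,[]), (b,[c]), (a,[b, c]), (w,[a])]", OF sym irr fin prems(3)]) (use H in auto)
      qed
    qed
    done
qed

lemma D12:
  assumes sg: "simple_graph V E" and hS: "S = {x, a, b, c, d}"
    and h: "tri E x a b" "tri E x c d" "distinct [x, a, b, c, d]"
    and g: "dg V E x = 6" "dg V E a = 3" "dg V E b = 3" "dg V E c = 3" "dg V E d = 3"
  shows "ewbr V E S (contains_F l) 4 S"
proof -
  note sym = sg_sym[OF sg] and irr = sg_irr[OF sg]
  have fin: "finite {x, a, b, c, d}" by simp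
  have d: "distinct [x, a, b, c, d]" using h unfolding dia_def tri_def by auto
  have e: "E x a" "E a b" "E x b" "E x c" "E c d" "E x d" using h unfolding dia_def tri_def by auto
  have e': "E a x" "E b a" "E b x" "E c x" "E d c" "E d x" using e sym by auto
  note H = d e e' g
  show ?thesis unfolding hS
    apply (rule ewbr_intro[where vfix=a, OF fin])
    subgoal by simp
    subgoal using dg_lower[of "{x, a, b, c, d}" "[x, b]" E a] H by auto
    subgoal for LL by (rule okl_colS[where xs="[(d,[]), (c,[d]), (b,[]), (x,[b, c, d]), (a,[x, b])]", OF sym irr fin]) (use H in auto)
    subgoal for LL by (rule okl_colS[where xs="[(d,[]), (c,[d]), (b,[]), (a,[b]), (x,[a, b, c, d])]", OF sym irr fin]) (use H in auto)
    subgoal premises prems for vv LL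
    proof -
      have "vv = x \<or> vv = a \<or> vv = b \<or> vv = c \<or> vv = d" using prems(1) by auto
      then show ?thesis
      proof (elim disjE)
        assume [simp]: "vv = x"
        show ?thesis by (rule okl_colS[where xs="[(d,[]), (c,[d]), (b,[]), (a,[b]), (x,[a, b, c, d])]", OF sym irr fin prems(3)]) (use H in auto)
      next
        assume [simp]: "vv = a"
        show ?thesis by (rule okl_colS[where xs="[(d,[]), (c,[d]), (b,[]), (a,[b]), (x,[a, b, c, d])]", OF sym irr fin prems(3)]) (use H in auto)
      next
        assume [simp]: "vv = b"
        show ?thesis by (rule okl_colS[where xs="[(d,[]), (c,[d]), (a,[]), (b,[a]), (x,[b, a, c, d])]", OF sym irr fin prems(3)]) (use H in auto)
      next
        assume [simp]: "vv = c"
        show ?thesis by (rule okl_colS[where xs="[(d,[]), (c,[d]), (b,[]), (a,[b]), (x,[a, b, c, d])]", OF sym irr fin prems(3)]) (use H in auto)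
      next
        assume [simp]: "vv = d"
        show ?thesis by (rule okl_colS[where xs="[(c,[]), (d,[c]), (b,[]), (a,[b]), (x,[a, b, d, c])]", OF sym irr fin prems(3)]) (use H in auto)
      qed
    qed
    done
qed

theorem mainTheorem9:
  fixes V :: "'a set" and E :: "'a \<Rightarrow> 'a \<Rightarrow> bool" and l :: nat and S :: "'a set"
  assumes "simple_graph V E"
    and "l \<ge> 3"
    and "configuration V E S"
  shows "ewbr V E S (contains_F l) 4 S"
  using assms(3) unfolding configuration_def
  apply (elim disjE exE conjE)
  subgoal by (rule D2a[OF assms(1)]; assumption)
  subgoal by (rule D2b[OF assms(1)]; assumption)
  subgoal by (rule D3[OF assms(1)]; assumption)
  subgoal by (rule D5[OF assms(1)]; assumption)
  subgoal by (rule D6[OF assms(1)]; assumption)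
  subgoal by (rule D7[OF assms(1)]; assumption)
  subgoal by (rule D8[OF assms(1)]; assumption)
  subgoal by (rule D9[OF assms(1)]; assumption)
  subgoal by (rule D10[OF assms(1)]; assumption)
  subgoal by (rule D11[OF assms(1)]; assumption)
  subgoal by (rule D12[OF assms(1)]; assumption)
  done

end
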